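(* For every integer $n\geq 2$, the operator $W_n^{*}$ on $H^2$ is mixing; in particular, $W_n^{*}$ is hypercyclic.
   Context: $H^2$ denotes the Hardy space of analytic functions $f(z)=\sum_{k\ge0}\hat f(k)z^k$ on the open unit disk $\mathbb{D}$ with $\|f\|_2^2=\sum_{k\ge0}|\hat f(k)|^2<\infty$, with inner product $\langle f,g\rangle=\sum_k \hat f(k)\overline{\hat g(k)}$. For $n\in\mathbb{N}$, $W_n$ is the bounded weighted composition operator on $H^2$ given by $W_nf(z)=(1+z+\cdots+z^{n-1})f(z^n)$, and $W_n^{*}$ is its Hilbert-space adjoint. An operator $T$ on a separable Banach space $Y$ is mixing if for every pair of non-empty open sets $U,V\subseteq Y$ there is $N$ with $T^k(U)\cap V\neq\emptyset$ for all $k\geq N$; it is hypercyclic if some $f\in Y$ has dense orbit $\{T^kf: k\in\mathbb{N}\}$. *)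

theory Defs
  imports "HOL-Complex_Analysis.Complex_Analysis"
begin

text \<open>Elements of H^2 are represented as functions on the complex plane that are
  holomorphic on the open unit disk and vanish outside it (so that every element
  of H^2 has exactly one representative).\<close>

definition hcoeff :: "(complex \<Rightarrow> complex) \<Rightarrow> nat \<Rightarrow> complex" where
  "hcoeff f k = (deriv ^^ k) f 0 / of_nat (fact k)"

definition H2 :: "(complex \<Rightarrow> complex) set" where
  "H2 = {f. f holomorphic_on ball 0 1 \<and> (\<forall>z. z \<notin> ball 0 1 \<longrightarrow> f z = 0)
            \<and> summable (\<lambda>k. (cmod (hcoeff f k))\<^sup>2)}"

definition h2_inner :: "(complex \<Rightarrow> complex) \<Rightarrow> (complex \<Rightarrow> complex) \<Rightarrow> complex" where
  "h2_inner f g = (\<Sum>k. hcoeff f k * cnj (hcoeff g k))"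

definition h2_norm :: "(complex \<Rightarrow> complex) \<Rightarrow> real" where
  "h2_norm f = sqrt (\<Sum>k. (cmod (hcoeff f k))\<^sup>2)"

definition h2_open :: "(complex \<Rightarrow> complex) set \<Rightarrow> bool" where
  "h2_open U \<longleftrightarrow> U \<subseteq> H2 \<and>
     (\<forall>f\<in>U. \<exists>e>0. \<forall>g\<in>H2. h2_norm (\<lambda>z. g z - f z) < e \<longrightarrow> g \<in> U)"

definition W :: "nat \<Rightarrow> (complex \<Rightarrow> complex) \<Rightarrow> (complex \<Rightarrow> complex)" where
  "W n f = (\<lambda>z. if z \<in> ball 0 1 then (\<Sum>j<n. z ^ j) * f (z ^ n) else 0)"

definition h2_adjoint :: "((complex \<Rightarrow> complex) \<Rightarrow> (complex \<Rightarrow> complex))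
      \<Rightarrow> (complex \<Rightarrow> complex) \<Rightarrow> (complex \<Rightarrow> complex)" where
  "h2_adjoint T g = (THE h. h \<in> H2 \<and> (\<forall>f\<in>H2. h2_inner (T f) g = h2_inner f h))"

definition h2_mixing :: "((complex \<Rightarrow> complex) \<Rightarrow> (complex \<Rightarrow> complex)) \<Rightarrow> bool" where
  "h2_mixing T \<longleftrightarrow> (\<forall>U V. h2_open U \<and> U \<noteq> {} \<and> h2_open V \<and> V \<noteq> {} \<longrightarrow>
      (\<exists>N. \<forall>k\<ge>N. (T ^^ k) ` U \<inter> V \<noteq> {}))"

definition h2_hypercyclic :: "((complex \<Rightarrow> complex) \<Rightarrow> (complex \<Rightarrow> complex)) \<Rightarrow> bool" where
  "h2_hypercyclic T \<longleftrightarrow> (\<exists>f\<in>H2. \<forall>g\<in>H2. \<forall>e>0. \<exists>k::nat.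
      h2_norm (\<lambda>z. (T ^^ k) f z - g z) < e)"

end

theory Submission
  imports Defs "HOL-Library.Countable"
begin


definition l2 :: "(nat \<Rightarrow> complex) \<Rightarrow> bool" where
  "l2 a \<longleftrightarrow> summable (\<lambda>k. (cmod (a k))\<^sup>2)"
definition nrm :: "(nat \<Rightarrow> complex) \<Rightarrow> real" where
  "nrm a = sqrt (\<Sum>k. (cmod (a k))\<^sup>2)"

lemma nrm_nonneg: "l2 a \<Longrightarrow> 0 \<le> nrm a"
  unfolding nrm_def l2_def by (simp add: suminf_nonneg)

lemma L2_le_nrm: assumes "l2 a" shows "L2_set (\<lambda>k. cmod (a k)) {..<K} \<le> nrm a"
proof -
  have "(\<Sum>k<K. (cmod (a k))\<^sup>2) \<le> (\<Sum>k. (cmod (a k))\<^sup>2)"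
    using assms unfolding l2_def by (intro sum_le_suminf) auto
  thus ?thesis unfolding L2_set_def nrm_def by simp
qed

lemma coord_le_nrm: assumes "l2 a" shows "cmod (a k) \<le> nrm a"
proof -
  have "cmod (a k) = L2_set (\<lambda>k. cmod (a k)) {k}" by (simp add: L2_set_def)
  also have "\<dots> \<le> L2_set (\<lambda>k. cmod (a k)) {..<Suc k}"
    unfolding L2_set_def by (intro real_sqrt_le_mono sum_mono2) auto
  also have "\<dots> \<le> nrm a" by (rule L2_le_nrm[OF assms])
  finally show ?thesis .
qed

lemma L2_bound:
  assumes "\<And>K. L2_set (\<lambda>k. cmod (a k)) {..<K} \<le> B"
  shows "l2 a" "nrm a \<le> B"
proof -
  have B0: "0 \<le> B" using assms[of 0] by simp
  have ps: "(\<Sum>k<K. (cmod (a k))\<^sup>2) \<le> B\<^sup>2" for K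
  proof -
    have "sqrt (\<Sum>k<K. (cmod (a k))\<^sup>2) \<le> B" using assms[of K] by (simp add: L2_set_def)
    moreover have "0 \<le> (\<Sum>k<K. (cmod (a k))\<^sup>2)" by (intro sum_nonneg) auto
    ultimately have "sqrt (\<Sum>k<K. (cmod (a k))\<^sup>2) ^ 2 \<le> B\<^sup>2"
      by (intro power_mono) auto
    moreover have "0 \<le> (\<Sum>k<K. (cmod (a k))\<^sup>2)" by (intro sum_nonneg) auto
    ultimately show ?thesis by simp
  qed
  show s: "l2 a" unfolding l2_def
    by (rule bounded_imp_summable[where B="B\<^sup>2"]) (use ps[of "Suc _"] in \<open>auto simp: lessThan_Suc_atMost\<close>)
  have "(\<Sum>k. (cmod (a k))\<^sup>2) \<le> B\<^sup>2"
    using s unfolding l2_def by (intro suminf_le_const ps)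
  hence "nrm a \<le> sqrt (B\<^sup>2)" unfolding nrm_def by (intro real_sqrt_le_mono)
  thus "nrm a \<le> B" using B0 by simp
qed

lemma nrm_add:
  assumes "l2 a" "l2 b"
  shows "l2 (\<lambda>k. a k + b k)" "nrm (\<lambda>k. a k + b k) \<le> nrm a + nrm b"
proof -
  have "L2_set (\<lambda>k. cmod (a k + b k)) {..<K} \<le> nrm a + nrm b" for K
  proof -
    have "L2_set (\<lambda>k. cmod (a k + b k)) {..<K} \<le> L2_set (\<lambda>k. cmod (a k) + cmod (b k)) {..<K}"
      by (intro L2_set_mono norm_triangle_ineq) auto
    also have "\<dots> \<le> L2_set (\<lambda>k. cmod (a k)) {..<K} + L2_set (\<lambda>k. cmod (b k)) {..<K}"
      by (rule L2_set_triangle_ineq)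
    also have "\<dots> \<le> nrm a + nrm b" using L2_le_nrm assms by (intro add_mono) auto
    finally show ?thesis .
  qed
  thus "l2 (\<lambda>k. a k + b k)" "nrm (\<lambda>k. a k + b k) \<le> nrm a + nrm b" by (rule L2_bound)+
qed

lemma l2_uminus [simp]: "l2 (\<lambda>k. - a k) = l2 a" by (simp add: l2_def)
lemma nrm_uminus [simp]: "nrm (\<lambda>k. - a k) = nrm a" by (simp add: nrm_def)

lemma nrm_diff:
  assumes "l2 a" "l2 b"
  shows "l2 (\<lambda>k. a k - b k)" "nrm (\<lambda>k. a k - b k) \<le> nrm a + nrm b"
  using nrm_add[of a "\<lambda>k. - b k"] assms by auto

lemma nrm_tri:
  assumes "l2 a" "l2 b" "l2 c"
  shows "nrm (\<lambda>k. a k - c k) \<le> nrm (\<lambda>k. a k - b k) + nrm (\<lambda>k. b k - c k)"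
  using nrm_add(2)[of "\<lambda>k. a k - b k" "\<lambda>k. b k - c k"] nrm_diff(1) assms by auto

lemma nrm_sym: "nrm (\<lambda>k. a k - b k) = nrm (\<lambda>k. b k - a k)"
  unfolding nrm_def by (simp add: norm_minus_commute)

lemma series_l2:
  assumes u: "\<And>l. l2 (u l)" and s: "summable (\<lambda>l. nrm (u l))"
  shows "\<And>k. summable (\<lambda>l. u l k)" "l2 (\<lambda>k. \<Sum>l. u l k)" "nrm (\<lambda>k. \<Sum>l. u l k) \<le> (\<Sum>l. nrm (u l))"
proof -
  show sk: "summable (\<lambda>l. u l k)" for k
    by (rule summable_comparison_test[OF _ s]) (use coord_le_nrm[OF u] in auto)
  have "L2_set (\<lambda>k. cmod (\<Sum>l. u l k)) {..<K} \<le> (\<Sum>l. nrm (u l))" for K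
  proof -
    have le: "L2_set (\<lambda>k. cmod (\<Sum>l<L. u l k)) {..<K} \<le> (\<Sum>l. nrm (u l))" for L
    proof -
      have "L2_set (\<lambda>k. cmod (\<Sum>l<L. u l k)) {..<K} \<le> (\<Sum>l<L. L2_set (\<lambda>k. cmod (u l k)) {..<K})"
      proof (induction L)
        case 0 then show ?case by (simp add: L2_set_def)
      next
        case (Suc L)
        have "L2_set (\<lambda>k. cmod (\<Sum>l<Suc L. u l k)) {..<K}
              \<le> L2_set (\<lambda>k. cmod (\<Sum>l<L. u l k) + cmod (u L k)) {..<K}"
          by (intro L2_set_mono) (auto intro: norm_triangle_ineq)
        also have "\<dots> \<le> L2_set (\<lambda>k. cmod (\<Sum>l<L. u l k)) {..<K} + L2_set (\<lambda>k. cmod (u L k)) {..<K}"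
          by (rule L2_set_triangle_ineq)
        also have "\<dots> \<le> (\<Sum>l<Suc L. L2_set (\<lambda>k. cmod (u l k)) {..<K})" using Suc by simp
        finally show ?case .
      qed
      also have "\<dots> \<le> (\<Sum>l<L. nrm (u l))" by (intro sum_mono L2_le_nrm u)
      also have "\<dots> \<le> (\<Sum>l. nrm (u l))" using s by (intro sum_le_suminf) (auto intro: nrm_nonneg u)
      finally show ?thesis .
    qed
    have "(\<lambda>L. L2_set (\<lambda>k. cmod (\<Sum>l<L. u l k)) {..<K}) \<longlonglongrightarrow> L2_set (\<lambda>k. cmod (\<Sum>l. u l k)) {..<K}"
      unfolding L2_set_def
      by (intro tendsto_real_sqrt tendsto_sum tendsto_power tendsto_norm summable_LIMSEQ sk)
    thus ?thesis using le by (intro LIMSEQ_le_const2) auto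
  qed
  thus "l2 (\<lambda>k. \<Sum>l. u l k)" "nrm (\<lambda>k. \<Sum>l. u l k) \<le> (\<Sum>l. nrm (u l))" by (rule L2_bound)+
qed



definition Tseq :: "nat \<Rightarrow> (nat \<Rightarrow> complex) \<Rightarrow> nat \<Rightarrow> complex" where
  "Tseq n a k = (\<Sum>j<n. a (n*k+j))"
definition Sseq :: "nat \<Rightarrow> (nat \<Rightarrow> complex) \<Rightarrow> nat \<Rightarrow> complex" where
  "Sseq n a k = a (k div n) / of_nat n"

lemma sum_blocks: "(\<Sum>i<A. \<Sum>j<n. f (n*i+j)) = (\<Sum>i<n*A. f i)" for A n :: nat
proof (induction A)
  case 0 then show ?case by simp
next
  case (Suc A)
  have "(\<Sum>i<n*Suc A. f i) = (\<Sum>i<n*A. f i) + (\<Sum>i\<in>{n*A..<n*A+n}. f i)"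
    by (simp add: sum.atLeastLessThan_concat[symmetric] lessThan_atLeast0 add.commute)
  also have "(\<Sum>i\<in>{n*A..<n*A+n}. f i) = (\<Sum>j<n. f (n*A+j))"
    by (simp add: sum.shift_bounds_nat_ivl[symmetric] lessThan_atLeast0 add.commute)
  finally show ?case using Suc by simp
qed

lemma sum_block_ivl: "(\<Sum>i\<in>{m..<m+d}. f i) = (\<Sum>j<d. f (m+j))" for m d :: nat
  by (induction d) auto

lemma Tpow: "(Tseq n ^^ m) a k = (\<Sum>i<n^m. a (n^m*k+i))"
proof (induction m arbitrary: a k)
  case 0 then show ?case by simp
next
  case (Suc m)
  have "(Tseq n ^^ Suc m) a k = (Tseq n ^^ m) (Tseq n a) k" by (simp add: funpow_Suc_right del: funpow.simps)
  also have "\<dots> = (\<Sum>i<n^m. Tseq n a (n^m*k+i))" by (rule Suc)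
  also have "\<dots> = (\<Sum>i<n^m. \<Sum>j<n. a (n*(n^m*k+i)+j))" by (simp add: Tseq_def)
  also have "\<dots> = (\<Sum>i<n^m. \<Sum>j<n. (\<lambda>i. a (n^Suc m*k + i)) (n*i+j))"
    by (simp add: algebra_simps)
  also have "\<dots> = (\<Sum>i<n*n^m. a (n^Suc m*k + i))" by (rule sum_blocks)
  finally show ?case by simp
qed

lemma Spow: assumes "n \<ge> 1" shows "(Sseq n ^^ m) a k = a (k div n^m) / of_nat (n^m)"
proof (induction m arbitrary: k)
  case 0 then show ?case by simp
next
  case (Suc m)
  show ?case using Suc by (simp add: Sseq_def div_mult2_eq mult.commute)
qed

lemma TS: assumes "n \<ge> 1" shows "Tseq n (Sseq n a) = a"
proof
  fix k
  have "Tseq n (Sseq n a) k = (\<Sum>j<n. a k / of_nat n)"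
    unfolding Tseq_def Sseq_def using assms by (intro sum.cong) auto
  also have "\<dots> = a k" using assms by simp
  finally show "Tseq n (Sseq n a) k = a k" .
qed

lemma TSpow: assumes "n \<ge> 1" shows "(Tseq n ^^ m) ((Sseq n ^^ m) a) = a"
proof (induction m)
  case 0 then show ?case by simp
next
  case (Suc m)
  have e: "(Sseq n ^^ Suc m) a = Sseq n ((Sseq n ^^ m) a)" by simp
  have "(Tseq n ^^ Suc m) ((Sseq n ^^ Suc m) a) = (Tseq n ^^ m) (Tseq n ((Sseq n ^^ Suc m) a))"
    by (simp add: funpow_Suc_right del: funpow.simps)
  also have "\<dots> = (Tseq n ^^ m) (Tseq n (Sseq n ((Sseq n ^^ m) a)))" by (simp only: e)
  also have "\<dots> = a" using TS[OF assms] Suc by simp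
  finally show ?case .
qed

lemma TSpow2: assumes "n \<ge> 1" "p \<le> q" shows "(Tseq n ^^ p) ((Sseq n ^^ q) a) = (Sseq n ^^ (q-p)) a"
proof -
  have "(Sseq n ^^ q) a = (Sseq n ^^ p) ((Sseq n ^^ (q-p)) a)"
    using assms(2) funpow_add[of p "q-p" "Sseq n"] by simp
  thus ?thesis using TSpow[OF assms(1)] by simp
qed

lemma spread_l2:
  assumes a: "l2 a" and d: "d \<ge> 1"
  shows "l2 (\<lambda>k. a (k div d) / of_nat d)" "nrm (\<lambda>k. a (k div d) / of_nat d) = nrm a / sqrt d"
proof -
  define g where "g k = (cmod (a (k div d) / of_nat d))\<^sup>2" for k
  have blk: "(\<Sum>j<d. g (d*i+j)) = (cmod (a i))\<^sup>2 / d" for i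
  proof -
    have "(\<Sum>j<d. g (d*i+j)) = (\<Sum>j<d. (cmod (a i))\<^sup>2 / d^2)"
      unfolding g_def using d by (intro sum.cong) (auto simp: norm_divide power_divide)
    also have "\<dots> = (cmod (a i))\<^sup>2 / d" using d by (simp add: power2_eq_square)
    finally show ?thesis .
  qed
  have g0: "0 \<le> g k" for k unfolding g_def by simp
  have ps: "sum g {..<N} \<le> (\<Sum>k. (cmod (a k))\<^sup>2) / d" for N
  proof -
    have "sum g {..<N} \<le> sum g {..<d*N}"
      using d by (intro sum_mono2 g0) auto
    also have "\<dots> = (\<Sum>i<N. (cmod (a i))\<^sup>2 / d)" by (simp add: sum_blocks[symmetric] blk)
    also have "\<dots> = (\<Sum>i<N. (cmod (a i))\<^sup>2) / d" by (simp add: sum_divide_distrib)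
    also have "\<dots> \<le> (\<Sum>k. (cmod (a k))\<^sup>2) / d"
      using a unfolding l2_def by (intro divide_right_mono sum_le_suminf) auto
    finally show ?thesis .
  qed
  have sg: "summable g"
    by (rule bounded_imp_summable[OF g0]) (use ps[of "Suc _"] in \<open>auto simp: lessThan_Suc_atMost\<close>)
  thus "l2 (\<lambda>k. a (k div d) / of_nat d)" unfolding l2_def g_def .
  have "(\<lambda>i. sum g {i*d..<i*d+d}) sums (suminf g)" using sums_group[OF summable_sums[OF sg]] d by simp
  moreover have "sum g {i*d..<i*d+d} = (cmod (a i))\<^sup>2 / d" for i
    by (simp add: sum_block_ivl blk mult.commute)
  ultimately have "(\<lambda>i. (cmod (a i))\<^sup>2 / d) sums (suminf g)" by simp
  moreover have "(\<lambda>i. (cmod (a i))\<^sup>2 / d) sums ((\<Sum>k. (cmod (a k))\<^sup>2) / d)"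
    using a unfolding l2_def by (intro sums_divide summable_sums)
  ultimately have "suminf g = (\<Sum>k. (cmod (a k))\<^sup>2) / d" using sums_unique2 by blast
  thus "nrm (\<lambda>k. a (k div d) / of_nat d) = nrm a / sqrt d"
    unfolding nrm_def g_def[symmetric] by (simp add: real_sqrt_divide)
qed

lemma Spow_l2:
  assumes "n \<ge> 1" "l2 a"
  shows "l2 ((Sseq n ^^ m) a)" "nrm ((Sseq n ^^ m) a) = nrm a / sqrt (n^m)"
proof -
  have e: "(Sseq n ^^ m) a = (\<lambda>k. a (k div n^m) / of_nat (n^m))" using Spow[OF assms(1)] by auto
  have "n^m \<ge> 1" using assms(1) by simp
  thus "l2 ((Sseq n ^^ m) a)" "nrm ((Sseq n ^^ m) a) = nrm a / sqrt (n^m)"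
    unfolding e by (rule spread_l2[OF assms(2)])+
qed

lemma T_l2:
  assumes a: "l2 a"
  shows "l2 (Tseq n a)" "nrm (Tseq n a) \<le> sqrt n * nrm a"
proof -
  have "L2_set (\<lambda>k. cmod (Tseq n a k)) {..<K} \<le> sqrt n * nrm a" for K
  proof -
    have cs: "(cmod (Tseq n a k))\<^sup>2 \<le> n * (\<Sum>j<n. (cmod (a (n*k+j)))\<^sup>2)" for k
    proof -
      have "cmod (Tseq n a k) \<le> (\<Sum>j<n. \<bar>cmod (a (n*k+j))\<bar> * \<bar>1\<bar>)"
        unfolding Tseq_def by (simp add: norm_sum)
      also have "\<dots> \<le> L2_set (\<lambda>j. cmod (a (n*k+j))) {..<n} * L2_set (\<lambda>j. 1) {..<n}"
        by (rule L2_set_mult_ineq)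
      finally have h: "cmod (Tseq n a k) \<le> L2_set (\<lambda>j. cmod (a (n*k+j))) {..<n} * sqrt n"
        by (simp add: L2_set_constant)
      have "(cmod (Tseq n a k))\<^sup>2 \<le> (L2_set (\<lambda>j. cmod (a (n*k+j))) {..<n} * sqrt n)\<^sup>2"
        by (intro power_mono h) auto
      also have "\<dots> = n * (\<Sum>j<n. (cmod (a (n*k+j)))\<^sup>2)"
        by (simp add: L2_set_def power_mult_distrib sum_nonneg)
      finally show ?thesis .
    qed
    have "(\<Sum>k<K. (cmod (Tseq n a k))\<^sup>2) \<le> (\<Sum>k<K. n * (\<Sum>j<n. (cmod (a (n*k+j)))\<^sup>2))"
      by (intro sum_mono cs)
    also have "\<dots> = n * (\<Sum>k<K. \<Sum>j<n. (cmod (a (n*k+j)))\<^sup>2)" by (simp add: sum_distrib_left)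
    also have "\<dots> = n * (\<Sum>i<n*K. (cmod (a i))\<^sup>2)" using sum_blocks[of "\<lambda>i. (cmod (a i))\<^sup>2" n K] by simp
    also have "\<dots> \<le> n * (nrm a)\<^sup>2"
    proof -
      have "(\<Sum>i<n*K. (cmod (a i))\<^sup>2) \<le> (\<Sum>i. (cmod (a i))\<^sup>2)"
        using a unfolding l2_def by (intro sum_le_suminf) auto
      also have "\<dots> = (nrm a)\<^sup>2" unfolding nrm_def using a unfolding l2_def
        by (simp add: suminf_nonneg)
      finally show ?thesis by (intro mult_left_mono) auto
    qed
    also have "\<dots> = (sqrt n * nrm a)\<^sup>2" by (simp add: power_mult_distrib)
    finally have "sqrt (\<Sum>k<K. (cmod (Tseq n a k))\<^sup>2) \<le> sqrt ((sqrt n * nrm a)\<^sup>2)"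
      by (rule real_sqrt_le_mono)
    thus ?thesis using nrm_nonneg[OF a] by (simp add: L2_set_def)
  qed
  thus "l2 (Tseq n a)" "nrm (Tseq n a) \<le> sqrt n * nrm a" by (rule L2_bound)+
qed

lemma Tpow_l2: "l2 a \<Longrightarrow> l2 ((Tseq n ^^ m) a)"
  by (induction m) (auto intro: T_l2)

lemma Tpow_fin:
  assumes supp: "\<And>k. k \<ge> L \<Longrightarrow> a k = 0" and L: "L \<le> n^d"
  shows "(Tseq n ^^ d) a = (\<lambda>k. if k = 0 then (\<Sum>i<L. a i) else 0)"
proof
  fix k
  show "(Tseq n ^^ d) a k = (if k = 0 then (\<Sum>i<L. a i) else 0)"
  proof (cases "k = 0")
    case True
    have "(\<Sum>i<n^d. a i) = (\<Sum>i<L. a i)"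
      using L supp by (intro sum.mono_neutral_right) auto
    thus ?thesis using True by (simp add: Tpow)
  next
    case False
    have "n^d \<le> n^d*k" using False by simp
    hence "n^d*k + i \<ge> L" for i using L by linarith
    thus ?thesis using False supp by (simp add: Tpow)
  qed
qed

lemma Tpow_lin: "(Tseq n ^^ m) (\<lambda>k. a k + b k) = (\<lambda>k. (Tseq n ^^ m) a k + (Tseq n ^^ m) b k)"
  by (rule ext) (simp add: Tpow sum.distrib)

lemma Tpow_series:
  assumes "\<And>k. summable (\<lambda>l. u l k)"
  shows "(Tseq n ^^ m) (\<lambda>k. \<Sum>l. u l k) = (\<lambda>k. \<Sum>l. (Tseq n ^^ m) (u l) k)"
  by (rule ext) (simp add: Tpow suminf_sum[symmetric] assms)



definition toH :: "(nat \<Rightarrow> complex) \<Rightarrow> complex \<Rightarrow> complex" where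
  "toH a = (\<lambda>z. if z \<in> ball 0 1 then (\<Sum>k. a k * z^k) else 0)"

lemma pow_summable:
  assumes a: "l2 a" and z: "cmod z < 1"
  shows "summable (\<lambda>k. a k * z^k)"
proof -
  have "summable (\<lambda>k. nrm a * cmod z ^ k)"
    using z by (intro summable_mult summable_geometric) auto
  thus ?thesis
    by (rule summable_comparison_test[rotated])
       (auto simp: norm_mult norm_power intro!: mult_right_mono coord_le_nrm a)
qed

lemma conv_rad: assumes a: "l2 a" shows "fps_conv_radius (Abs_fps a) \<ge> 1"
  unfolding fps_conv_radius_def
proof (rule conv_radius_geI_ex')
  fix r :: real assume "0 < r" "ereal r < 1"
  thus "summable (\<lambda>n. fps_nth (Abs_fps a) n * of_real r ^ n)"
    by (auto intro!: pow_summable a)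
qed

lemma toH_H2:
  assumes a: "l2 a"
  shows "toH a \<in> H2" "hcoeff (toH a) = a"
proof -
  have eq: "toH a z = eval_fps (Abs_fps a) z" if "z \<in> ball 0 1" for z
    using that by (simp add: toH_def eval_fps_def)
  have "eval_fps (Abs_fps a) holomorphic_on ball 0 1"
  proof (rule holomorphic_on_eval_fps, rule subsetI)
    fix x :: complex assume "x \<in> ball 0 1"
    hence "ereal (cmod x) < 1" by (simp add: one_ereal_def)
    hence "ereal (cmod x) < fps_conv_radius (Abs_fps a)"
      using conv_rad[OF a] by (rule order_less_le_trans)
    thus "x \<in> eball 0 (fps_conv_radius (Abs_fps a))" by simp
  qed
  hence hol: "toH a holomorphic_on ball 0 1"
    by (rule holomorphic_transform) (simp add: eq)
  have exp: "toH a has_fps_expansion Abs_fps a"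
    unfolding has_fps_expansion_def
  proof
    have "(0::ereal) < 1" by simp
    thus "0 < fps_conv_radius (Abs_fps a)" using conv_rad[OF a] by (rule order_less_le_trans)
    show "\<forall>\<^sub>F z in nhds 0. eval_fps (Abs_fps a) z = toH a z"
      using eventually_nhds_in_open[of "ball 0 1" 0] by (rule eventually_mono) (auto simp: eq)
  qed
  show co: "hcoeff (toH a) = a"
  proof
    fix k show "hcoeff (toH a) k = a k"
      using fps_nth_fps_expansion[OF exp, of k] by (simp add: hcoeff_def)
  qed
  show "toH a \<in> H2" unfolding H2_def using hol a co by (auto simp: toH_def l2_def)
qed

lemma H2_toH:
  assumes f: "f \<in> H2"
  shows "toH (hcoeff f) = f" "l2 (hcoeff f)"
proof -
  show "l2 (hcoeff f)" using f by (simp add: H2_def l2_def)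
  show "toH (hcoeff f) = f"
  proof
    fix z
    show "toH (hcoeff f) z = f z"
    proof (cases "z \<in> ball 0 1")
      case True
      have "(\<lambda>n. (deriv ^^ n) f 0 / fact n * (z - 0)^n) sums f z"
        using f True by (intro holomorphic_power_series) (auto simp: H2_def)
      thus ?thesis using True by (simp add: toH_def hcoeff_def sums_iff)
    next
      case False thus ?thesis using f by (simp add: toH_def H2_def)
    qed
  qed
qed

lemma toH_diff:
  assumes "l2 a" "l2 b"
  shows "(\<lambda>z. toH a z - toH b z) = toH (\<lambda>k. a k - b k)"
proof
  fix z show "toH a z - toH b z = toH (\<lambda>k. a k - b k) z"
  proof (cases "z \<in> ball 0 1")
    case True
    hence "cmod z < 1" by simp
    hence "(\<Sum>k. a k * z^k) - (\<Sum>k. b k * z^k) = (\<Sum>k. a k * z^k - b k * z^k)"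
      using assms pow_summable by (intro suminf_diff) auto
    also have "\<dots> = (\<Sum>k. (a k - b k) * z^k)" by (simp add: left_diff_distrib)
    finally show ?thesis using True by (simp add: toH_def)
  qed (simp add: toH_def)
qed

lemma h2_norm_nrm: "h2_norm f = nrm (hcoeff f)"
  by (simp add: h2_norm_def nrm_def)

lemma h2_norm_diff:
  assumes "l2 a" "f \<in> H2"
  shows "h2_norm (\<lambda>z. toH a z - f z) = nrm (\<lambda>k. a k - hcoeff f k)"
proof -
  have "(\<lambda>z. toH a z - f z) = (\<lambda>z. toH a z - toH (hcoeff f) z)" using H2_toH[OF assms(2)] by simp
  also have "\<dots> = toH (\<lambda>k. a k - hcoeff f k)" using toH_diff assms H2_toH(2) by blast
  finally have e: "(\<lambda>z. toH a z - f z) = toH (\<lambda>k. a k - hcoeff f k)" .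
  have "l2 (\<lambda>k. a k - hcoeff f k)" using nrm_diff(1) assms H2_toH(2) by blast
  thus ?thesis unfolding e h2_norm_nrm by (simp only: toH_H2(2))
qed



lemma l2_div:
  assumes n: "n \<ge> 1" and a: "l2 a"
  shows "l2 (\<lambda>k. a (k div n))"
proof -
  have "summable (\<lambda>k. (real n)\<^sup>2 * (cmod (a (k div n) / of_nat n))\<^sup>2)"
    using spread_l2(1)[OF a n] unfolding l2_def by (rule summable_mult)
  moreover have "(real n)\<^sup>2 * (cmod (a (k div n) / of_nat n))\<^sup>2 = (cmod (a (k div n)))\<^sup>2" for k
    using n by (simp add: norm_divide power_divide)
  ultimately show ?thesis unfolding l2_def by simp
qed

lemma W_toH:
  assumes n: "n \<ge> 1" and f: "f \<in> H2"
  shows "W n f = toH (\<lambda>k. hcoeff f (k div n))"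
proof
  fix z
  define a where "a = hcoeff f"
  have a: "l2 a" using H2_toH(2)[OF f] by (simp add: a_def)
  show "W n f z = toH (\<lambda>k. hcoeff f (k div n)) z"
  proof (cases "z \<in> ball 0 1")
    case False thus ?thesis by (simp add: W_def toH_def)
  next
    case True
    hence z: "cmod z < 1" by simp
    have zn: "z^n \<in> ball 0 1" using z n by (simp add: norm_power power_less_one_iff)
    have fz: "f (z^n) = (\<Sum>m. a m * (z^n)^m)"
      using zn arg_cong[OF H2_toH(1)[OF f], of "\<lambda>h. h (z^n)"] by (simp add: toH_def a_def)
    define b where "b k = a (k div n) * z^k" for k
    have sb: "summable b" unfolding b_def using pow_summable[OF l2_div[OF n a] z] .
    have "(\<lambda>m. sum b {m*n..<m*n+n}) sums (suminf b)"
      using sums_group[OF summable_sums[OF sb]] n by simp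
    moreover have "sum b {m*n..<m*n+n} = (\<Sum>j<n. z^j) * (a m * (z^n)^m)" for m
    proof -
      have "sum b {m*n..<m*n+n} = (\<Sum>j<n. a m * (z^(m*n) * z^j))"
        unfolding sum_block_ivl b_def using n by (intro sum.cong) (auto simp: power_add)
      also have "\<dots> = (\<Sum>j<n. z^j) * (a m * (z^n)^m)"
        using power_mult[of z m n] power_mult[of z n m]
        by (simp add: sum_distrib_left sum_distrib_right algebra_simps)
      finally show ?thesis .
    qed
    ultimately have "(\<lambda>m. (\<Sum>j<n. z^j) * (a m * (z^n)^m)) sums (suminf b)" by simp
    moreover have "(\<lambda>m. (\<Sum>j<n. z^j) * (a m * (z^n)^m)) sums ((\<Sum>j<n. z^j) * (\<Sum>m. a m * (z^n)^m))"
      using pow_summable[OF a, of "z^n"] zn by (intro sums_mult summable_sums) auto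
    ultimately have "suminf b = (\<Sum>j<n. z^j) * (\<Sum>m. a m * (z^n)^m)" by (rule sums_unique2)
    hence "suminf b = (\<Sum>j<n. z^j) * f (z^n)" by (simp only: fz)
    moreover have "suminf b = (\<Sum>k. hcoeff f (k div n) * z^k)" by (simp add: b_def[abs_def] a_def)
    ultimately show ?thesis using True by (simp add: W_def toH_def)
  qed
qed

lemma prod_summable:
  assumes "l2 a" "l2 b"
  shows "summable (\<lambda>k. a k * cnj (b k))"
proof -
  have "summable (\<lambda>k. (cmod (a k))\<^sup>2 + (cmod (b k))\<^sup>2)"
    using assms unfolding l2_def by (rule summable_add)
  moreover have "norm (a k * cnj (b k)) \<le> (cmod (a k))\<^sup>2 + (cmod (b k))\<^sup>2" for k
  proof -
    have "0 \<le> (cmod (a k) - cmod (b k))\<^sup>2" by simp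
    hence "2 * (cmod (a k) * cmod (b k)) \<le> (cmod (a k))\<^sup>2 + (cmod (b k))\<^sup>2"
      by (simp add: power2_eq_square algebra_simps)
    moreover have "0 \<le> cmod (a k) * cmod (b k)" by simp
    moreover have "norm (a k * cnj (b k)) = cmod (a k) * cmod (b k)" by (simp add: norm_mult)
    ultimately show ?thesis by linarith
  qed
  ultimately show ?thesis by (rule summable_comparison_test')
qed

lemma inner_W:
  assumes n: "n \<ge> 1" and f: "f \<in> H2" and g: "g \<in> H2"
  shows "h2_inner (W n f) g = h2_inner f (toH (Tseq n (hcoeff g)))"
proof -
  define a where "a = hcoeff f"
  define c where "c = hcoeff g"
  have a: "l2 a" using H2_toH(2)[OF f] by (simp add: a_def)
  have c: "l2 c" using H2_toH(2)[OF g] by (simp add: c_def)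
  have ad: "l2 (\<lambda>k. a (k div n))" by (rule l2_div[OF n a])
  have hW: "hcoeff (W n f) = (\<lambda>k. a (k div n))" using W_toH[OF n f] toH_H2(2)[OF ad] by (simp add: a_def)
  have hT: "hcoeff (toH (Tseq n c)) = Tseq n c" using toH_H2(2)[OF T_l2(1)[OF c]] .
  define b where "b k = a (k div n) * cnj (c k)" for k
  have sb: "summable b" unfolding b_def by (rule prod_summable[OF ad c])
  have "(\<lambda>m. sum b {m*n..<m*n+n}) sums (suminf b)"
    using sums_group[OF summable_sums[OF sb]] n by simp
  moreover have "sum b {m*n..<m*n+n} = a m * cnj (Tseq n c m)" for m
  proof -
    have "sum b {m*n..<m*n+n} = (\<Sum>j<n. a m * cnj (c (n*m+j)))"
      unfolding sum_block_ivl b_def using n by (intro sum.cong) (auto simp: mult.commute)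
    also have "\<dots> = a m * cnj (Tseq n c m)" by (simp add: Tseq_def sum_distrib_left)
    finally show ?thesis .
  qed
  ultimately have "(\<lambda>m. a m * cnj (Tseq n c m)) sums (suminf b)" by simp
  hence e: "suminf b = (\<Sum>m. a m * cnj (Tseq n c m))" by (simp add: sums_iff)
  have l: "h2_inner (W n f) g = suminf b" unfolding h2_inner_def hW c_def b_def[abs_def] by (rule refl)
  have r: "h2_inner f (toH (Tseq n c)) = (\<Sum>m. a m * cnj (Tseq n c m))" unfolding h2_inner_def hT a_def by (rule refl)
  show ?thesis unfolding c_def[symmetric] by (simp only: l e r)
qed

lemma adj:
  assumes n: "n \<ge> 1" and g: "g \<in> H2"
  shows "h2_adjoint (W n) g = toH (Tseq n (hcoeff g))"
proof -
  define h0 where "h0 = toH (Tseq n (hcoeff g))"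
  have l0: "l2 (Tseq n (hcoeff g))" using T_l2(1)[OF H2_toH(2)[OF g]] .
  have h0: "h0 \<in> H2" unfolding h0_def using toH_H2(1)[OF l0] .
  have P0: "h0 \<in> H2 \<and> (\<forall>f\<in>H2. h2_inner (W n f) g = h2_inner f h0)"
    using h0 inner_W[OF n _ g] by (simp add: h0_def)
  have uniq: "h = h0" if P: "h \<in> H2 \<and> (\<forall>f\<in>H2. h2_inner (W n f) g = h2_inner f h)" for h
  proof -
    have eq: "h2_inner f h = h2_inner f h0" if "f \<in> H2" for f using P P0 that by auto
    have "hcoeff h k = hcoeff h0 k" for k
    proof -
      define d where "d i = (if i = k then (1::complex) else 0)" for i
      have ld: "l2 d" unfolding l2_def d_def by (rule summable_finite[of "{k}"]) auto
      have ev: "h2_inner (toH d) q = cnj (hcoeff q k)" for q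
        unfolding h2_inner_def toH_H2(2)[OF ld]
        by (subst suminf_finite[of "{k}"]) (auto simp: d_def)
      show ?thesis using eq[OF toH_H2(1)[OF ld]] unfolding ev by simp
    qed
    hence "hcoeff h = hcoeff h0" by auto
    hence "toH (hcoeff h) = toH (hcoeff h0)" by simp
    thus "h = h0" using H2_toH(1)[of h] H2_toH(1)[OF h0] P by simp
  qed
  show ?thesis unfolding h2_adjoint_def h0_def[symmetric]
    apply (rule the_equality)
     apply (rule P0)
    apply (erule uniq)
    done
qed

lemma adj_pow:
  assumes n: "n \<ge> 1" and g: "g \<in> H2"
  shows "(h2_adjoint (W n) ^^ m) g = toH ((Tseq n ^^ m) (hcoeff g))"
proof (induction m)
  case 0 thus ?case using H2_toH(1)[OF g] by simp
next
  case (Suc m)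
  have l: "l2 ((Tseq n ^^ m) (hcoeff g))" using Tpow_l2[OF H2_toH(2)[OF g]] .
  have "(h2_adjoint (W n) ^^ Suc m) g = h2_adjoint (W n) (toH ((Tseq n ^^ m) (hcoeff g)))"
    using Suc by simp
  also have "\<dots> = toH (Tseq n ((Tseq n ^^ m) (hcoeff g)))"
    using adj[OF n toH_H2(1)[OF l]] toH_H2(2)[OF l] by simp
  finally show ?case by simp
qed



definition seqof :: "(rat \<times> rat) list \<Rightarrow> nat \<Rightarrow> complex" where
  "seqof xs k = (if k < length xs then Complex (of_rat (fst (xs!k))) (of_rat (snd (xs!k))) else 0)"

lemma seqof_l2: "l2 (seqof xs)"
  unfolding l2_def by (rule summable_finite[of "{..<length xs}"]) (auto simp: seqof_def)

lemma seqof_supp: "k \<ge> length xs \<Longrightarrow> seqof xs k = 0"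
  by (simp add: seqof_def)

lemma rat_approx:
  fixes z :: complex assumes "d > 0"
  shows "\<exists>q::rat\<times>rat. cmod (Complex (of_rat (fst q)) (of_rat (snd q)) - z) < d"
proof -
  obtain r1 where r1: "r1 \<in> \<rat>" "Re z - d/2 < r1" "r1 < Re z + d/2"
    using Rats_dense_in_real[of "Re z - d/2" "Re z + d/2"] assms by auto
  obtain r2 where r2: "r2 \<in> \<rat>" "Im z - d/2 < r2" "r2 < Im z + d/2"
    using Rats_dense_in_real[of "Im z - d/2" "Im z + d/2"] assms by auto
  obtain q1 where q1: "r1 = of_rat q1" using r1(1) Rats_cases by blast
  obtain q2 where q2: "r2 = of_rat q2" using r2(1) Rats_cases by blast
  have "cmod (Complex r1 r2 - z) \<le> \<bar>Re (Complex r1 r2 - z)\<bar> + \<bar>Im (Complex r1 r2 - z)\<bar>"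
    by (rule cmod_le)
  also have "\<dots> < d" using r1 r2 by (simp add: abs_less_iff)
  finally show ?thesis using q1 q2 by (intro exI[of _ "(q1, q2)"]) simp
qed

lemma nrm_sq: "l2 a \<Longrightarrow> (nrm a)\<^sup>2 = (\<Sum>k. (cmod (a k))\<^sup>2)"
  unfolding nrm_def l2_def by (simp add: suminf_nonneg)

lemma dense_seqof:
  assumes a: "l2 a" and e: "e > 0"
  shows "\<exists>xs. nrm (\<lambda>k. seqof xs k - a k) < e"
proof -
  have sa: "summable (\<lambda>k. (cmod (a k))\<^sup>2)" using a by (simp add: l2_def)
  obtain K where K: "norm (\<Sum>i. (cmod (a (i + K)))\<^sup>2) < e\<^sup>2/4"
    using suminf_exist_split[of "e\<^sup>2/4", OF _ sa] e by auto
  define d where "d = e / (2 * (K+1))"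
  have d: "d > 0" using e by (simp add: d_def)
  have "\<forall>k. \<exists>q::rat\<times>rat. cmod (Complex (of_rat (fst q)) (of_rat (snd q)) - a k) < d"
    using rat_approx[OF d] by blast
  then obtain Q where Q: "\<And>k. cmod (Complex (of_rat (fst (Q k))) (of_rat (snd (Q k))) - a k) < d"
    by metis
  define xs where "xs = map Q [0..<K]"
  define b where "b k = seqof xs k - a k" for k
  have lb: "l2 b" unfolding b_def[abs_def] using nrm_diff(1)[OF seqof_l2 a] .
  have sb: "summable (\<lambda>k. (cmod (b k))\<^sup>2)" using lb by (simp add: l2_def)
  have "(\<Sum>k. (cmod (b k))\<^sup>2) = (\<Sum>k. (cmod (b (k + K)))\<^sup>2) + (\<Sum>k<K. (cmod (b k))\<^sup>2)"
    by (rule suminf_split_initial_segment[OF sb])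
  also have "(\<Sum>k. (cmod (b (k + K)))\<^sup>2) = (\<Sum>k. (cmod (a (k + K)))\<^sup>2)"
    by (simp add: b_def seqof_def xs_def)
  also have "(\<Sum>k<K. (cmod (b k))\<^sup>2) \<le> (\<Sum>k<K. d\<^sup>2)"
  proof (intro sum_mono)
    fix k assume "k \<in> {..<K}"
    hence "b k = Complex (of_rat (fst (Q k))) (of_rat (snd (Q k))) - a k"
      by (simp add: b_def seqof_def xs_def)
    hence "cmod (b k) < d" using Q by simp
    thus "(cmod (b k))\<^sup>2 \<le> d\<^sup>2" by (intro power_mono) auto
  qed
  also have "(\<Sum>k<K. d\<^sup>2) = K * d\<^sup>2" by simp
  also have "K * d\<^sup>2 \<le> e\<^sup>2/4"
  proof -
    have "K * d\<^sup>2 = e\<^sup>2/4 * (K / (K+1)^2)" by (simp add: d_def power_divide power_mult_distrib power2_eq_square field_simps)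
    also have "K / (K+1)^2 \<le> (1::real)"
    proof -
      have "real K \<le> (K+1)^2" by (simp add: power2_eq_square algebra_simps)
      thus ?thesis by (simp add: divide_le_eq_1)
    qed
    hence "e\<^sup>2/4 * (K / (K+1)^2) \<le> e\<^sup>2/4 * 1" by (intro mult_left_mono) auto
    finally show ?thesis by simp
  qed
  finally have lt: "(\<Sum>k. (cmod (b k))\<^sup>2) < e\<^sup>2/4 + e\<^sup>2/4" using K by simp
  have "nrm b = sqrt (\<Sum>k. (cmod (b k))\<^sup>2)" by (simp add: nrm_def)
  also have "\<dots> < sqrt (e\<^sup>2)"
  proof (intro real_sqrt_less_mono)
    have "0 \<le> (\<Sum>k. (cmod (b k))\<^sup>2)" by (intro suminf_nonneg sb) auto
    thus "(\<Sum>k. (cmod (b k))\<^sup>2) < e\<^sup>2" using lt by linarith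
  qed
  also have "\<dots> = e" using e by simp
  finally show ?thesis unfolding b_def[abs_def] by blast
qed



lemma TSpow3: assumes "n \<ge> 1" "q \<le> p" shows "(Tseq n ^^ p) ((Sseq n ^^ q) a) = (Tseq n ^^ (p-q)) a"
proof -
  have "(Tseq n ^^ p) ((Sseq n ^^ q) a) = (Tseq n ^^ (p-q)) ((Tseq n ^^ q) ((Sseq n ^^ q) a))"
    using assms(2) funpow_add[of "p-q" q "Tseq n"] by simp
  thus ?thesis using TSpow[OF assms(1)] by simp
qed

lemma pow_ge: assumes "n \<ge> 2" shows "d < n^d"
proof -
  have "(2::nat)^d \<le> n^d" using assms by (intro power_mono) auto
  thus ?thesis using less_exp[of d] by linarith
qed

lemma small:
  fixes n :: nat
  assumes n: "n \<ge> 2" and c: "c > 0"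
  shows "\<exists>N. \<forall>d\<ge>N. nrm w / sqrt (n^d) < c"
proof (intro exI allI impI)
  fix d assume d: "d \<ge> nat \<lceil>(nrm w / c)\<^sup>2\<rceil>"
  have "(nrm w / c)\<^sup>2 \<le> real d" using d by linarith
  also have "real d < real (n^d)" using pow_ge[OF n] by (simp only: of_nat_less_iff)
  finally have "sqrt ((nrm w / c)\<^sup>2) < sqrt (real (n^d))" by (rule real_sqrt_less_mono)
  hence "\<bar>nrm w / c\<bar> < sqrt (n^d)" by simp
  hence "nrm w / c < sqrt (n^d)" by linarith
  moreover have "sqrt (n^d) > 0" using n by simp
  ultimately show "nrm w / sqrt (n^d) < c" using c by (simp add: field_simps)
qed

lemma e0_l2: "l2 (\<lambda>k. if k = 0 then s else 0)"
  unfolding l2_def by (rule summable_finite[of "{0}"]) auto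

lemma mixing:
  assumes n2: "n \<ge> 2"
  shows "h2_mixing (h2_adjoint (W n))"
  unfolding h2_mixing_def
proof (intro allI impI)
  fix U V assume UV: "h2_open U \<and> U \<noteq> {} \<and> h2_open V \<and> V \<noteq> {}"
  have n: "n \<ge> 1" using n2 by simp
  obtain u where u: "u \<in> U" using UV by auto
  obtain v where v: "v \<in> V" using UV by auto
  have uH: "u \<in> H2" and vH: "v \<in> H2" using u v UV by (auto simp: h2_open_def)
  obtain e1 where e1: "e1 > 0" "\<And>g. g \<in> H2 \<Longrightarrow> h2_norm (\<lambda>z. g z - u z) < e1 \<Longrightarrow> g \<in> U"
  proof -
    have "\<exists>e>0. \<forall>g\<in>H2. h2_norm (\<lambda>z. g z - u z) < e \<longrightarrow> g \<in> U"
      using UV u unfolding h2_open_def by blast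
    thus ?thesis using that by blast
  qed
  obtain e2 where e2: "e2 > 0" "\<And>g. g \<in> H2 \<Longrightarrow> h2_norm (\<lambda>z. g z - v z) < e2 \<Longrightarrow> g \<in> V"
  proof -
    have "\<exists>e>0. \<forall>g\<in>H2. h2_norm (\<lambda>z. g z - v z) < e \<longrightarrow> g \<in> V"
      using UV v unfolding h2_open_def by blast
    thus ?thesis using that by blast
  qed
  define e where "e = min e1 e2"
  have e: "e > 0" using e1 e2 by (simp add: e_def)
  define ua where "ua = hcoeff u"
  define va where "va = hcoeff v"
  have lua: "l2 ua" and lva: "l2 va" using H2_toH(2) uH vH by (auto simp: ua_def va_def)
  obtain xs where xs: "nrm (\<lambda>k. seqof xs k - ua k) < e/2" using dense_seqof[OF lua, of "e/2"] e by auto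
  obtain ys where ys: "nrm (\<lambda>k. seqof ys k - va k) < e/2" using dense_seqof[OF lva, of "e/2"] e by auto
  define p where "p = seqof xs"
  define q where "q = seqof ys"
  define L where "L = length xs"
  define s where "s = (\<Sum>i<L. p i)"
  define r where "r k = q k - (if k = 0 then s else 0)" for k
  have lp: "l2 p" and lq: "l2 q" by (auto simp: p_def q_def seqof_l2)
  have lr: "l2 r" unfolding r_def[abs_def] using nrm_diff(1)[OF lq e0_l2] .
  obtain N1 where N1: "\<And>d. d \<ge> N1 \<Longrightarrow> nrm r / sqrt (n^d) < e/2"
    using small[OF n2, of "e/2" r] e by auto
  show "\<exists>N. \<forall>k\<ge>N. (h2_adjoint (W n) ^^ k) ` U \<inter> V \<noteq> {}"
  proof (intro exI allI impI)
    fix k assume k: "k \<ge> max N1 L"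
    define x where "x i = p i + (Sseq n ^^ k) r i" for i
    have lSr: "l2 ((Sseq n ^^ k) r)" and nSr: "nrm ((Sseq n ^^ k) r) = nrm r / sqrt (n^k)"
      using Spow_l2[OF n lr] by auto
    have lx: "l2 x" unfolding x_def[abs_def] using nrm_add(1)[OF lp lSr] .
    define f where "f = toH x"
    have fH: "f \<in> H2" and hf: "hcoeff f = x" using toH_H2[OF lx] by (auto simp: f_def)
    have "h2_norm (\<lambda>z. f z - u z) = nrm (\<lambda>i. x i - ua i)"
      unfolding f_def ua_def by (rule h2_norm_diff[OF lx uH])
    also have "\<dots> \<le> nrm (\<lambda>i. x i - p i) + nrm (\<lambda>i. p i - ua i)" by (rule nrm_tri[OF lx lp lua])
    also have "(\<lambda>i. x i - p i) = (Sseq n ^^ k) r" by (simp add: x_def)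
    also have "nrm ((Sseq n ^^ k) r) < e/2" using nSr N1[of k] k by simp
    hence "nrm ((Sseq n ^^ k) r) + nrm (\<lambda>i. p i - ua i) < e/2 + e/2"
      using xs unfolding p_def by (intro add_strict_mono)
    finally have "h2_norm (\<lambda>z. f z - u z) < e1" unfolding e_def by linarith
    hence fU: "f \<in> U" by (rule e1(2)[OF fH])
    have "(h2_adjoint (W n) ^^ k) f = toH ((Tseq n ^^ k) x)" using adj_pow[OF n fH] hf by simp
    also have "(Tseq n ^^ k) x = q"
    proof -
      have "(Tseq n ^^ k) x = (\<lambda>i. (Tseq n ^^ k) p i + (Tseq n ^^ k) ((Sseq n ^^ k) r) i)"
        unfolding x_def[abs_def] by (rule Tpow_lin)
      also have "(Tseq n ^^ k) ((Sseq n ^^ k) r) = r" by (rule TSpow[OF n])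
      also have "(Tseq n ^^ k) p = (\<lambda>i. if i = 0 then (\<Sum>i<L. p i) else 0)"
      proof (rule Tpow_fin)
        show "\<And>i. L \<le> i \<Longrightarrow> p i = 0" by (simp add: p_def L_def seqof_supp)
        show "L \<le> n^k" using k pow_ge[OF n2, of k] by linarith
      qed
      finally show ?thesis by (auto simp: r_def s_def)
    qed
    finally have Tf: "(h2_adjoint (W n) ^^ k) f = toH q" .
    have "h2_norm (\<lambda>z. toH q z - v z) = nrm (\<lambda>i. q i - va i)"
      unfolding va_def by (rule h2_norm_diff[OF lq vH])
    also have "\<dots> < e2" using ys e unfolding q_def e_def by linarith
    finally have qV: "toH q \<in> V" by (rule e2(2)[OF toH_H2(1)[OF lq]])
    have "(h2_adjoint (W n) ^^ k) f \<in> (h2_adjoint (W n) ^^ k) ` U" using fU by (rule imageI)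
    hence "toH q \<in> (h2_adjoint (W n) ^^ k) ` U \<inter> V" using qV Tf by simp
    thus "(h2_adjoint (W n) ^^ k) ` U \<inter> V \<noteq> {}" by auto
  qed
qed



lemma geo_tail: "(\<Sum>l. (1/2::real)^(l + Suc j)) = (1/2)^j"
proof -
  have "(\<Sum>l. (1/2::real)^(l + Suc j)) = (\<Sum>l. (1/2)^Suc j * (1/2)^l)" by (simp add: power_add mult.commute)
  also have "\<dots> = (1/2)^Suc j * (\<Sum>l. (1/2::real)^l)"
    by (rule suminf_mult) (rule summable_geometric, simp)
  also have "(\<Sum>l. (1/2::real)^l) = 2" using suminf_geometric[of "1/2::real"] by simp
  finally show ?thesis by simp
qed

lemma hyper:
  assumes n2: "n \<ge> 2"
  shows "h2_hypercyclic (h2_adjoint (W n))"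
proof -
  have n: "n \<ge> 1" using n2 by simp
  define XS :: "nat \<Rightarrow> (rat \<times> rat) list" where "XS j = from_nat (fst (prod_decode j))" for j
  define Y where "Y j = seqof (XS j)" for j
  define LY where "LY j = length (XS j)" for j
  define sg where "sg j = (\<Sum>i<LY j. Y j i)" for j
  define c where "c j = (if j = 0 then 0 else sg (j-1))" for j
  define w where "w j k = Y j k - (if k = 0 then c j else 0)" for j k
  define Lw where "Lw j = LY j + 1" for j
  have lY: "l2 (Y j)" for j unfolding Y_def by (rule seqof_l2)
  have Ysupp: "k \<ge> LY j \<Longrightarrow> Y j k = 0" for j k unfolding Y_def LY_def by (rule seqof_supp)
  have lw: "l2 (w j)" for j
    unfolding w_def using nrm_diff(1)[OF lY e0_l2] by blast
  have wsupp: "k \<ge> Lw j \<Longrightarrow> w j k = 0" for j k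
    using Ysupp[of j k] by (simp add: w_def Lw_def)
  have sw: "(\<Sum>i<Lw j. w j i) = sg j - c j" for j
  proof -
    have "(\<Sum>i<Lw j. w j i) = (\<Sum>i<Lw j. Y j i) - (\<Sum>i<Lw j. (if i = 0 then c j else 0))"
      unfolding w_def by (rule sum_subtractf)
    also have "(\<Sum>i<Lw j. (if i = 0 then c j else 0)) = c j"
      by (simp add: Lw_def)
    also have "(\<Sum>i<Lw j. Y j i) = sg j"
      using Ysupp[of j "LY j"] by (simp add: Lw_def sg_def)
    finally show ?thesis .
  qed
  have tele: "(\<Sum>l<j. \<Sum>i<Lw l. w l i) = c j" for j
  proof (induction j)
    case 0 show ?case by (simp add: c_def)
  next
    case (Suc j) thus ?case by (simp add: sw c_def)
  qed
  have "\<forall>j. \<exists>N. \<forall>d\<ge>N. nrm (w j) / sqrt (n^d) < (1/2)^j"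
    using small[OF n2] by simp
  then obtain Gf where Gf: "\<And>j d. d \<ge> Gf j \<Longrightarrow> nrm (w j) / sqrt (n^d) < (1/2)^j"
    by metis
  define G where "G j = Gf j + (\<Sum>i<j. Lw i) + 1" for j
  define m where "m j = (\<Sum>i<Suc j. G i)" for j
  have mSuc: "m (Suc j) = m j + G (Suc j)" for j by (simp add: m_def)
  have mmono: "i \<le> j \<Longrightarrow> m i \<le> m j" for i j
    by (rule lift_Suc_mono_le[of m]) (auto simp: mSuc)
  have gap: "i < j \<Longrightarrow> m i + G j \<le> m j" for i j
  proof (induction j)
    case 0 thus ?case by simp
  next
    case (Suc j)
    hence "m i \<le> m j" using mmono by simp
    thus ?case by (simp add: mSuc)
  qed
  have Gm: "G l \<le> m l" for l unfolding m_def by (rule member_le_sum) auto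
  have P1: "Lw i \<le> n^(m j - m i)" if "i < j" for i j
  proof -
    have "Lw i \<le> (\<Sum>t<j. Lw t)" using that by (intro member_le_sum) auto
    also have "\<dots> < G j" by (simp add: G_def)
    also have "\<dots> \<le> m j - m i" using gap[OF that] by simp
    also have "\<dots> < n^(m j - m i)" by (rule pow_ge[OF n2])
    finally show ?thesis by simp
  qed
  define u where "u l = (Sseq n ^^ m l) (w l)" for l
  have lu: "l2 (u l)" for l unfolding u_def using Spow_l2(1)[OF n lw] .
  have nu: "nrm (u l) \<le> (1/2)^l" for l
  proof -
    have "nrm (u l) = nrm (w l) / sqrt (n^(m l))" unfolding u_def by (rule Spow_l2(2)[OF n lw])
    also have "\<dots> < (1/2)^l" by (rule Gf) (use Gm[of l] in \<open>simp add: G_def\<close>)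
    finally show ?thesis by simp
  qed
  have snu: "summable (\<lambda>l. nrm (u l))"
    by (rule summable_comparison_test'[OF summable_geometric[of "1/2::real"], of 0])
       (use nu nrm_nonneg[OF lu] in auto)
  define x where "x k = (\<Sum>l. u l k)" for k
  have skx: "\<And>k. summable (\<lambda>l. u l k)" by (rule series_l2(1)[OF lu snu])
  have lx: "l2 x" unfolding x_def[abs_def] by (rule series_l2(2)[OF lu snu])
  define f where "f = toH x"
  have fH: "f \<in> H2" and hf: "hcoeff f = x" using toH_H2[OF lx] by (auto simp: f_def)
  have key: "nrm (\<lambda>k. (Tseq n ^^ m j) x k - Y j k) \<le> (1/2)^j" for j
  proof -
    define F where "F l = (Tseq n ^^ m j) (u l)" for l
    have Tx: "(Tseq n ^^ m j) x = (\<lambda>k. \<Sum>l. F l k)"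
      unfolding x_def[abs_def] F_def by (rule Tpow_series[OF skx])
    have sF: "summable (\<lambda>l. F l k)" for k
      unfolding F_def Tpow by (intro summable_sum skx)
    have head: "(\<Sum>l<Suc j. F l k) = Y j k" for k
    proof -
      have Fl: "F l = (\<lambda>k. if k = 0 then (\<Sum>i<Lw l. w l i) else 0)" if "l < j" for l
      proof -
        have "F l = (Tseq n ^^ (m j - m l)) (w l)"
          unfolding F_def u_def using mmono[of l j] that by (intro TSpow3[OF n]) auto
        also have "\<dots> = (\<lambda>k. if k = 0 then (\<Sum>i<Lw l. w l i) else 0)"
          by (rule Tpow_fin[OF _ P1[OF that]]) (rule wsupp)
        finally show ?thesis .
      qed
      have Fj: "F j = w j"
        unfolding F_def u_def using TSpow[OF n] by simp
      have "(\<Sum>l<Suc j. F l k) = (\<Sum>l<j. F l k) + F j k" by simp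
      also have "(\<Sum>l<j. F l k) = (\<Sum>l<j. (if k = 0 then (\<Sum>i<Lw l. w l i) else 0))"
        by (intro sum.cong) (auto simp: Fl)
      also have "\<dots> = (if k = 0 then c j else 0)" using tele[of j] by simp
      finally show ?thesis using Fj by (simp add: w_def)
    qed
    define u' where "u' l = (Sseq n ^^ (m (l + Suc j) - m j)) (w (l + Suc j))" for l
    have Ftail: "F (l + Suc j) = u' l" for l
      unfolding F_def u_def u'_def using mmono[of j "l + Suc j"] by (intro TSpow2[OF n]) auto
    have lu': "l2 (u' l)" for l unfolding u'_def using Spow_l2(1)[OF n lw] .
    have nu': "nrm (u' l) \<le> (1/2)^(l + Suc j)" for l
    proof -
      have "nrm (u' l) = nrm (w (l + Suc j)) / sqrt (n^(m (l + Suc j) - m j))"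
        unfolding u'_def by (rule Spow_l2(2)[OF n lw])
      also have "\<dots> < (1/2)^(l + Suc j)"
        by (rule Gf) (use gap[of j "l + Suc j"] in \<open>simp add: G_def\<close>)
      finally show ?thesis by simp
    qed
    have sgeo: "summable (\<lambda>l. (1/2::real)^(l + Suc j))"
      by (rule summable_ignore_initial_segment) (rule summable_geometric, simp)
    have snu': "summable (\<lambda>l. nrm (u' l))"
      by (rule summable_comparison_test'[OF sgeo, of 0]) (use nu' nrm_nonneg[OF lu'] in auto)
    have diff: "(\<lambda>k. (Tseq n ^^ m j) x k - Y j k) = (\<lambda>k. \<Sum>l. u' l k)"
    proof
      fix k
      have sp: "(\<Sum>l. F l k) = (\<Sum>l. F (l + Suc j) k) + (\<Sum>l<Suc j. F l k)"
        by (rule suminf_split_initial_segment[OF sF])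
      have e1: "(Tseq n ^^ m j) x k = (\<Sum>l. F l k)" by (simp only: Tx)
      have e2: "(\<Sum>l. F (l + Suc j) k) = (\<Sum>l. u' l k)" by (simp only: Ftail)
      show "(Tseq n ^^ m j) x k - Y j k = (\<Sum>l. u' l k)"
        using sp e1 e2 head[of k] by (metis add_diff_cancel_right')
    qed
    have "nrm (\<lambda>k. \<Sum>l. u' l k) \<le> (\<Sum>l. nrm (u' l))" by (rule series_l2(3)[OF lu' snu'])
    also have "\<dots> \<le> (\<Sum>l. (1/2::real)^(l + Suc j))" by (rule suminf_le[OF nu' snu' sgeo])
    also have "\<dots> = (1/2)^j" by (rule geo_tail)
    finally show ?thesis unfolding diff .
  qed
  show ?thesis unfolding h2_hypercyclic_def
  proof (intro bexI[OF _ fH] ballI allI impI)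
    fix g and e :: real assume gH: "g \<in> H2" and e: "e > 0"
    define ga where "ga = hcoeff g"
    have lga: "l2 ga" using H2_toH(2)[OF gH] by (simp add: ga_def)
    obtain xs where xs: "nrm (\<lambda>k. seqof xs k - ga k) < e/2" using dense_seqof[OF lga, of "e/2"] e by auto
    obtain J where J: "(1/2::real)^J < e/2" using real_arch_pow_inv[of "e/2" "1/2"] e by auto
    define j where "j = prod_encode (to_nat xs, J)"
    have Yj: "Y j = seqof xs" by (simp add: Y_def XS_def j_def)
    have jJ: "J \<le> j" unfolding j_def by (rule le_prod_encode_2)
    have "(1/2::real)^j \<le> (1/2)^J" using jJ by (intro power_decreasing) auto
    have lT: "l2 ((Tseq n ^^ m j) x)" by (rule Tpow_l2[OF lx])
    have "(h2_adjoint (W n) ^^ m j) f = toH ((Tseq n ^^ m j) x)" using adj_pow[OF n fH] hf by simp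
    hence "h2_norm (\<lambda>z. (h2_adjoint (W n) ^^ m j) f z - g z) = nrm (\<lambda>k. (Tseq n ^^ m j) x k - ga k)"
      using h2_norm_diff[OF lT gH] by (simp add: ga_def)
    also have "\<dots> \<le> nrm (\<lambda>k. (Tseq n ^^ m j) x k - Y j k) + nrm (\<lambda>k. Y j k - ga k)"
      by (rule nrm_tri[OF lT lY lga])
    also have "\<dots> < e"
      using key[of j] xs J \<open>(1/2::real)^j \<le> (1/2)^J\<close> unfolding Yj by linarith
    finally show "\<exists>k. h2_norm (\<lambda>z. (h2_adjoint (W n) ^^ k) f z - g z) < e" by blast
  qed
qed


theorem mainTheorem1:
  fixes n :: nat
  assumes "n \<ge> 2"
  shows "h2_mixing (h2_adjoint (W n)) \<and> h2_hypercyclic (h2_adjoint (W n))"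
  using mixing[OF assms] hyper[OF assms] by (rule conjI)

end
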